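(* Let $(X,\beta)$ be a prechart. For all $x,y\in X$ and all $k\in\mathbb{N}$, $x\sim^{(k)}y$ if and only if $\mathsf{bd}_\beta(x,y)\le 2^{-k}$.
   Context: Fix a set $V=\{v_1,v_2,\dots\}$ of variables and a set $\Sigma$ of letters. A prechart is a pair $(X,\beta)$ with $\beta:X\to P_{\mathrm{fin}}(\Sigma\times X+V)$; write $x\xrightarrow{a}x'$ iff $(a,x')\in\beta(x)$, $x\rhd v$ iff $v\in\beta(x)$, and $E(x)=\beta(x)\cap V$. Stratified bisimilarity: $x\sim^{(0)}y$ always; $x\sim^{(n+1)}y$ iff $E(x)=E(y)$, every $x\xrightarrow{a}x'$ is matched by some $y\xrightarrow{a}y'$ with $x'\sim^{(n)}y'$, and symmetrically. A 1-bounded pseudometric on $X$ is $d:X\times X\to[0,1]$ with $d(x,x)=0$, symmetry and triangle inequality; $D_X$ is the set of these, ordered pointwise. For $d\in D_X$, $d^\uparrow$ on $\Sigma\times X+V$ is $d^\uparrow((a,x),(a,y))=\tfrac12 d(x,y)$, $d^\uparrow(m,n)=0$ if $m=n$, $1$ otherwise. $\mathcal H(d)(A,B)=\max\{\sup_{x\in A}\inf_{y\in B}d(x,y),\sup_{y\in B}\inf_{x\in A}d(y,x)\}$ with $\sup\emptyset=0$, $\inf\emptyset=1$. $\Phi_\beta(d)(x,y)=\mathcal H(d^\uparrow)(\beta(x),\beta(y))$, a monotone map on $D_X$; $\mathsf{bd}_\beta$ is its least fixpoint (so $\mathsf{bd}_\beta=\Phi_\beta(\mathsf{bd}_\beta)$).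 *)

theory Defs
  imports Main "HOL.Real"
begin

text \<open>A prechart with state set the type 'x, letters 'a, variables 'v:
  beta :: 'x => ('a * 'x + 'v) set, with finitely many outcomes per state.\<close>

definition prechart :: "('x \<Rightarrow> ('a \<times> 'x + 'v) set) \<Rightarrow> bool" where
  "prechart \<beta> \<longleftrightarrow> (\<forall>x. finite (\<beta> x))"

definition Eout :: "('x \<Rightarrow> ('a \<times> 'x + 'v) set) \<Rightarrow> 'x \<Rightarrow> 'v set" where
  "Eout \<beta> x = {v. Inr v \<in> \<beta> x}"

fun strat_bisim :: "('x \<Rightarrow> ('a \<times> 'x + 'v) set) \<Rightarrow> nat \<Rightarrow> 'x \<Rightarrow> 'x \<Rightarrow> bool" where
  "strat_bisim \<beta> 0 x y = True"
| "strat_bisim \<beta> (Suc n) x y \<longleftrightarrow>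
     Eout \<beta> x = Eout \<beta> y
   \<and> (\<forall>a x'. Inl (a, x') \<in> \<beta> x \<longrightarrow> (\<exists>y'. Inl (a, y') \<in> \<beta> y \<and> strat_bisim \<beta> n x' y'))
   \<and> (\<forall>a y'. Inl (a, y') \<in> \<beta> y \<longrightarrow> (\<exists>x'. Inl (a, x') \<in> \<beta> x \<and> strat_bisim \<beta> n x' y'))"

definition pseudometrics :: "('x \<Rightarrow> 'x \<Rightarrow> real) set" where
  "pseudometrics = {d. (\<forall>x y. 0 \<le> d x y \<and> d x y \<le> 1) \<and> (\<forall>x. d x x = 0)
      \<and> (\<forall>x y. d x y = d y x) \<and> (\<forall>x y z. d x z \<le> d x y + d y z)}"

fun lift_dist :: "('x \<Rightarrow> 'x \<Rightarrow> real) \<Rightarrow> ('a \<times> 'x + 'v) \<Rightarrow> ('a \<times> 'x + 'v) \<Rightarrow> real" where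
  "lift_dist d (Inl (a, x)) (Inl (b, y)) = (if a = b then d x y / 2 else 1)"
| "lift_dist d m n = (if m = n then 0 else 1)"

definition sup0 :: "real set \<Rightarrow> real" where
  "sup0 S = (if S = {} then 0 else Sup S)"

definition inf1 :: "real set \<Rightarrow> real" where
  "inf1 S = (if S = {} then 1 else Inf S)"

definition hausdorff :: "('b \<Rightarrow> 'b \<Rightarrow> real) \<Rightarrow> 'b set \<Rightarrow> 'b set \<Rightarrow> real" where
  "hausdorff d A B = max (sup0 ((\<lambda>x. inf1 ((\<lambda>y. d x y) ` B)) ` A))
                         (sup0 ((\<lambda>y. inf1 ((\<lambda>x. d y x) ` A)) ` B))"

definition Phi :: "('x \<Rightarrow> ('a \<times> 'x + 'v) set) \<Rightarrow> ('x \<Rightarrow> 'x \<Rightarrow> real) \<Rightarrow> ('x \<Rightarrow> 'x \<Rightarrow> real)" where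
  "Phi \<beta> d = (\<lambda>x y. hausdorff (lift_dist d) (\<beta> x) (\<beta> y))"

definition bd :: "('x \<Rightarrow> ('a \<times> 'x + 'v) set) \<Rightarrow> 'x \<Rightarrow> 'x \<Rightarrow> real" where
  "bd \<beta> = (THE d. d \<in> pseudometrics \<and> Phi \<beta> d = d
              \<and> (\<forall>d' \<in> pseudometrics. Phi \<beta> d' = d' \<longrightarrow> d \<le> d'))"

end

theory Submission
  imports Defs
begin

lemma sb_refl: "strat_bisim b k x x"
  by (induction k arbitrary: x) auto

lemma sb_sym: "strat_bisim b k x y \<Longrightarrow> strat_bisim b k y x"
proof (induction k arbitrary: x y)
  case 0 then show ?case by simp
next
  case (Suc k)
  have e: "Eout b x = Eout b y"
    and f1: "\<forall>a x'. Inl (a, x') \<in> b x \<longrightarrow> (\<exists>y'. Inl (a, y') \<in> b y \<and> strat_bisim b k x' y')"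
    and f2: "\<forall>a y'. Inl (a, y') \<in> b y \<longrightarrow> (\<exists>x'. Inl (a, x') \<in> b x \<and> strat_bisim b k x' y')"
    using Suc.prems by simp_all
  have g1: "\<forall>a y'. Inl (a, y') \<in> b y \<longrightarrow> (\<exists>x'. Inl (a, x') \<in> b x \<and> strat_bisim b k y' x')"
    using f2 Suc.IH by blast
  have g2: "\<forall>a x'. Inl (a, x') \<in> b x \<longrightarrow> (\<exists>y'. Inl (a, y') \<in> b y \<and> strat_bisim b k y' x')"
    using f1 Suc.IH by blast
  show ?case using e g1 g2 by simp
qed

lemma sb_trans: "strat_bisim b k x y \<Longrightarrow> strat_bisim b k y z \<Longrightarrow> strat_bisim b k x z"
proof (induction k arbitrary: x y z)
  case 0 then show ?case by simp
next
  case (Suc k)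
  show ?case
  proof -
    have e: "Eout b x = Eout b z" using Suc.prems by auto
    have f: "\<forall>a x'. Inl (a, x') \<in> b x \<longrightarrow> (\<exists>z'. Inl (a, z') \<in> b z \<and> strat_bisim b k x' z')"
    proof (intro allI impI)
      fix a x' assume "Inl (a, x') \<in> b x"
      then obtain y' where "Inl (a, y') \<in> b y" "strat_bisim b k x' y'" using Suc.prems(1) strat_bisim.simps(2) by metis
      then obtain z' where "Inl (a, z') \<in> b z" "strat_bisim b k y' z'" using Suc.prems(2) strat_bisim.simps(2) by metis
      then show "\<exists>z'. Inl (a, z') \<in> b z \<and> strat_bisim b k x' z'"
        using Suc.IH \<open>strat_bisim b k x' y'\<close> by blast
    qed
    have g: "\<forall>a z'. Inl (a, z') \<in> b z \<longrightarrow> (\<exists>x'. Inl (a, x') \<in> b x \<and> strat_bisim b k x' z')"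
    proof (intro allI impI)
      fix a z' assume "Inl (a, z') \<in> b z"
      then obtain y' where "Inl (a, y') \<in> b y" "strat_bisim b k y' z'" using Suc.prems(2) strat_bisim.simps(2) by metis
      then obtain x' where "Inl (a, x') \<in> b x" "strat_bisim b k x' y'" using Suc.prems(1) strat_bisim.simps(2) by metis
      then show "\<exists>x'. Inl (a, x') \<in> b x \<and> strat_bisim b k x' z'"
        using Suc.IH \<open>strat_bisim b k y' z'\<close> by blast
    qed
    show ?thesis using e f g by simp
  qed
qed

lemma sb_Suc: "strat_bisim b (Suc k) x y \<Longrightarrow> strat_bisim b k x y"
proof (induction k arbitrary: x y)
  case 0 then show ?case by simp
next
  case (Suc k)
  have e: "Eout b x = Eout b y"
    and f1: "\<forall>a x'. Inl (a, x') \<in> b x \<longrightarrow> (\<exists>y'. Inl (a, y') \<in> b y \<and> strat_bisim b (Suc k) x' y')"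
    and f2: "\<forall>a y'. Inl (a, y') \<in> b y \<longrightarrow> (\<exists>x'. Inl (a, x') \<in> b x \<and> strat_bisim b (Suc k) x' y')"
    using Suc.prems by simp_all
  have g1: "\<forall>a x'. Inl (a, x') \<in> b x \<longrightarrow> (\<exists>y'. Inl (a, y') \<in> b y \<and> strat_bisim b k x' y')"
    using f1 Suc.IH by blast
  have g2: "\<forall>a y'. Inl (a, y') \<in> b y \<longrightarrow> (\<exists>x'. Inl (a, x') \<in> b x \<and> strat_bisim b k x' y')"
    using f2 Suc.IH by blast
  show ?case using e g1 g2 by simp
qed

lemma sb_mono: "j \<le> k \<Longrightarrow> strat_bisim b k x y \<Longrightarrow> strat_bisim b j x y"
proof (induction k rule: dec_induct)
  case base then show ?case by simp
next
  case (step n) then show ?case using sb_Suc by metis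
qed

lemma inf1_ge: "finite S \<Longrightarrow> (\<forall>s\<in>S. c \<le> s) \<Longrightarrow> c \<le> 1 \<Longrightarrow> c \<le> inf1 S"
  unfolding inf1_def by (auto simp: cInf_eq_Min)

lemma inf1_le: "finite S \<Longrightarrow> s \<in> S \<Longrightarrow> s \<le> c \<Longrightarrow> inf1 S \<le> c"
proof -
  assume a: "finite S" "s \<in> S" "s \<le> c"
  then have "inf1 S = Min S" unfolding inf1_def by (auto simp: cInf_eq_Min)
  then show ?thesis using Min_le[OF a(1,2)] a(3) by linarith
qed

lemma sup0_ge: "finite S \<Longrightarrow> s \<in> S \<Longrightarrow> c \<le> s \<Longrightarrow> c \<le> sup0 S"
proof -
  assume a: "finite S" "s \<in> S" "c \<le> s"
  then have "sup0 S = Max S" unfolding sup0_def by (auto simp: cSup_eq_Max)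
  then show ?thesis using Max_ge[OF a(1,2)] a(3) by linarith
qed

lemma sup0_le: "finite S \<Longrightarrow> (\<forall>s\<in>S. s \<le> c) \<Longrightarrow> 0 \<le> c \<Longrightarrow> sup0 S \<le> c"
  unfolding sup0_def by (auto simp: cSup_eq_Max)

lemma H0: "(\<forall>p q. 0 \<le> e p q) \<Longrightarrow> finite A \<Longrightarrow> finite B \<Longrightarrow> 0 \<le> hausdorff e A B"
proof -
  assume e: "\<forall>p q. 0 \<le> e p q" and A: "finite A" and B: "finite B"
  show ?thesis
  proof (cases "A = {}")
    case True then show ?thesis unfolding hausdorff_def sup0_def by auto
  next
    case False
    then obtain p where p: "p \<in> A" by auto
    have "0 \<le> inf1 ((\<lambda>y. e p y) ` B)" using B e by (intro inf1_ge) auto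
    then have "0 \<le> sup0 ((\<lambda>x. inf1 ((\<lambda>y. e x y) ` B)) ` A)"
      using A p by (intro sup0_ge[where s="inf1 ((\<lambda>y. e p y) ` B)"]) auto
    then show ?thesis unfolding hausdorff_def by auto
  qed
qed

lemma H1: "(\<forall>p q. e p q \<le> 1) \<Longrightarrow> finite A \<Longrightarrow> finite B \<Longrightarrow> hausdorff e A B \<le> 1"
proof -
  assume e: "\<forall>p q. e p q \<le> 1" and A: "finite A" and B: "finite B"
  have i: "inf1 ((f::_\<Rightarrow>real) ` S) \<le> 1" if "finite S" "\<forall>s. f s \<le> 1" for f S
    using that unfolding inf1_def by (auto simp: cInf_eq_Min intro: order_trans[OF Min_le])
  have "sup0 ((\<lambda>x. inf1 ((\<lambda>y. e x y) ` B)) ` A) \<le> 1"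
    using A B e i[of B] by (intro sup0_le) auto
  moreover have "sup0 ((\<lambda>y. inf1 ((\<lambda>x. e y x) ` A)) ` B) \<le> 1"
    using A B e i[of A] by (intro sup0_le) auto
  ultimately show ?thesis unfolding hausdorff_def by auto
qed

lemma H2: "0 \<le> c \<Longrightarrow> finite A \<Longrightarrow> finite B \<Longrightarrow> (\<forall>p\<in>A. \<exists>q\<in>B. e p q \<le> c)
  \<Longrightarrow> (\<forall>q\<in>B. \<exists>p\<in>A. e q p \<le> c) \<Longrightarrow> hausdorff e A B \<le> c"
proof -
  assume c: "0 \<le> c" and A: "finite A" and B: "finite B"
    and h1: "\<forall>p\<in>A. \<exists>q\<in>B. e p q \<le> c" and h2: "\<forall>q\<in>B. \<exists>p\<in>A. e q p \<le> c"
  have "sup0 ((\<lambda>x. inf1 ((\<lambda>y. e x y) ` B)) ` A) \<le> c"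
  proof (rule sup0_le)
    show "\<forall>s\<in>(\<lambda>x. inf1 ((\<lambda>y. e x y) ` B)) ` A. s \<le> c"
    proof
      fix s assume "s \<in> (\<lambda>x. inf1 ((\<lambda>y. e x y) ` B)) ` A"
      then obtain p where p: "p \<in> A" "s = inf1 ((\<lambda>y. e p y) ` B)" by auto
      then obtain q where "q \<in> B" "e p q \<le> c" using h1 by auto
      then show "s \<le> c" using p B by (auto intro: inf1_le)
    qed
  qed (use A c in auto)
  moreover have "sup0 ((\<lambda>y. inf1 ((\<lambda>x. e y x) ` A)) ` B) \<le> c"
  proof (rule sup0_le)
    show "\<forall>s\<in>(\<lambda>y. inf1 ((\<lambda>x. e y x) ` A)) ` B. s \<le> c"
    proof
      fix s assume "s \<in> (\<lambda>y. inf1 ((\<lambda>x. e y x) ` A)) ` B"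
      then obtain q where q: "q \<in> B" "s = inf1 ((\<lambda>x. e q x) ` A)" by auto
      then obtain p where "p \<in> A" "e q p \<le> c" using h2 by auto
      then show "s \<le> c" using q A by (auto intro: inf1_le)
    qed
  qed (use B c in auto)
  ultimately show ?thesis unfolding hausdorff_def by auto
qed

lemma H3a: "c \<le> 1 \<Longrightarrow> finite A \<Longrightarrow> finite B \<Longrightarrow> p \<in> A \<Longrightarrow> (\<forall>q\<in>B. c \<le> e p q)
  \<Longrightarrow> c \<le> hausdorff e A B"
proof -
  assume c: "c \<le> 1" and A: "finite A" and B: "finite B" and p: "p \<in> A" and h: "\<forall>q\<in>B. c \<le> e p q"
  have "c \<le> inf1 ((\<lambda>y. e p y) ` B)" using B h c by (intro inf1_ge) auto
  then have "c \<le> sup0 ((\<lambda>x. inf1 ((\<lambda>y. e x y) ` B)) ` A)"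
    using A p by (intro sup0_ge[where s="inf1 ((\<lambda>y. e p y) ` B)"]) auto
  then show ?thesis unfolding hausdorff_def by auto
qed

lemma H3b: "c \<le> 1 \<Longrightarrow> finite A \<Longrightarrow> finite B \<Longrightarrow> q \<in> B \<Longrightarrow> (\<forall>p\<in>A. c \<le> e q p)
  \<Longrightarrow> c \<le> hausdorff e A B"
proof -
  assume c: "c \<le> 1" and A: "finite A" and B: "finite B" and q: "q \<in> B" and h: "\<forall>p\<in>A. c \<le> e q p"
  have "c \<le> inf1 ((\<lambda>x. e q x) ` A)" using A h c by (intro inf1_ge) auto
  then have "c \<le> sup0 ((\<lambda>y. inf1 ((\<lambda>x. e y x) ` A)) ` B)"
    using B q by (intro sup0_ge[where s="inf1 ((\<lambda>x. e q x) ` A)"]) auto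
  then show ?thesis unfolding hausdorff_def by auto
qed

lemma lift_Inr1: "lift_dist d (Inr v) q = (if q = Inr v then 0 else 1)"
  by (cases q) auto

lemma lift_Inr2: "lift_dist d q (Inr v) = (if q = Inr v then 0 else 1)"
  by (cases q) auto

lemma lift_Inl_ne: "\<not> (\<exists>y'. q = Inl (a, y')) \<Longrightarrow> lift_dist d (Inl (a, x')) q = 1"
  by (cases q) auto

lemma lift_Inl_ne2: "\<not> (\<exists>y'. q = Inl (a, y')) \<Longrightarrow> lift_dist d q (Inl (a, x')) = 1"
  by (cases q) auto

lemma lift_Inl_set1: "q \<in> B \<Longrightarrow> \<forall>y'. Inl (a, y') \<notin> B \<Longrightarrow> lift_dist d (Inl (a, x')) q = 1"
  by (cases q) auto

lemma lift_Inl_set2: "q \<in> B \<Longrightarrow> \<forall>y'. Inl (a, y') \<notin> B \<Longrightarrow> lift_dist d q (Inl (a, x')) = 1"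
  by (cases q) auto

lemma half_pow_le [simp]: "(1/2::real) ^ j \<le> 1" "(1/2::real) ^ j \<le> 2"
  by (simp_all add: power_le_one order_trans[OF power_le_one])

lemma lift_nonneg: "(\<forall>x y. 0 \<le> d x y) \<Longrightarrow> 0 \<le> lift_dist d p q"
  by (cases "(d,p,q)" rule: lift_dist.cases) auto

lemma lift_le1: "(\<forall>x y. d x y \<le> 1) \<Longrightarrow> lift_dist d p q \<le> 1"
  by (cases "(d,p,q)" rule: lift_dist.cases) (auto, smt (verit))


definition DD :: "('x \<Rightarrow> ('a \<times> 'x + 'v) set) \<Rightarrow> 'x \<Rightarrow> 'x \<Rightarrow> real" where
  "DD b x y = (if \<exists>k. \<not> strat_bisim b k x y
     then (1/2::real) ^ ((LEAST k. \<not> strat_bisim b k x y) - 1) else 0)"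

lemma KD: "strat_bisim b k x y \<longleftrightarrow> DD b x y \<le> (1/2) ^ k"
proof (cases "\<exists>k. \<not> strat_bisim b k x y")
  case True
  define n where "n = (LEAST k. \<not> strat_bisim b k x y)"
  have nn: "\<not> strat_bisim b n x y" unfolding n_def using True by (rule LeastI_ex)
  have n0: "n \<noteq> 0" using nn by (cases n) auto
  have "strat_bisim b k x y \<longleftrightarrow> k < n"
  proof
    assume "strat_bisim b k x y"
    then show "k < n" using nn sb_mono[of n k b x y] by (cases "n \<le> k") auto
  next
    assume "k < n" then show "strat_bisim b k x y" unfolding n_def using not_less_Least by blast
  qed
  moreover have "DD b x y = (1/2) ^ (n - 1)" unfolding DD_def n_def using True by simp
  moreover have "((1/2::real) ^ (n - 1) \<le> (1/2) ^ k) \<longleftrightarrow> k \<le> n - 1"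
    by (rule power_decreasing_iff) auto
  ultimately show ?thesis using n0 by auto
next
  case False
  then show ?thesis unfolding DD_def by auto
qed

lemma DD_ge: "\<not> strat_bisim b (Suc k) x y \<Longrightarrow> (1/2) ^ k \<le> DD b x y"
proof -
  assume a: "\<not> strat_bisim b (Suc k) x y"
  then have ex: "\<exists>k. \<not> strat_bisim b k x y" by blast
  define n where "n = (LEAST k. \<not> strat_bisim b k x y)"
  have "n \<le> Suc k" unfolding n_def using a by (rule Least_le)
  moreover have "DD b x y = (1/2) ^ (n - 1)" unfolding DD_def n_def using ex by simp
  ultimately show ?thesis by (simp add: power_decreasing)
qed

lemma DD_nonneg: "0 \<le> DD b x y"
  unfolding DD_def by auto

lemma DD_le1: "DD b x y \<le> 1"
  using KD[of b 0 x y] by simp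

lemma DD_zero: "(\<forall>k. strat_bisim b k x y) \<Longrightarrow> DD b x y = 0"
  unfolding DD_def by auto

lemma DD_cases: "DD b x y \<noteq> 0 \<Longrightarrow>
   \<exists>m. DD b x y = (1/2) ^ m \<and> strat_bisim b m x y \<and> \<not> strat_bisim b (Suc m) x y"
proof -
  assume a: "DD b x y \<noteq> 0"
  then have ex: "\<exists>k. \<not> strat_bisim b k x y" unfolding DD_def
    by (cases "\<exists>k. \<not> strat_bisim b k x y") auto
  define n where "n = (LEAST k. \<not> strat_bisim b k x y)"
  have nn: "\<not> strat_bisim b n x y" unfolding n_def using ex by (rule LeastI_ex)
  have n0: "n \<noteq> 0" using nn by (cases n) auto
  have d: "DD b x y = (1/2) ^ (n - 1)" unfolding DD_def n_def using ex by simp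
  have "strat_bisim b (n - 1) x y" using d KD[of b "n - 1" x y] by simp
  then show ?thesis using d nn n0 by (intro exI[of _ "n - 1"]) auto
qed

lemma DD_alt: "DD b x y = (let P = (\<lambda>k. strat_bisim b k x y) in
   if \<exists>k. \<not> P k then (1/2::real) ^ ((LEAST k. \<not> P k) - 1) else 0)"
  unfolding DD_def Let_def by simp

lemma DD_sym: "DD b x y = DD b y x"
proof -
  have eq: "(\<lambda>k. strat_bisim b k x y) = (\<lambda>k. strat_bisim b k y x)"
    by (intro ext iffI; erule sb_sym)
  show ?thesis unfolding DD_alt[of b x y] DD_alt[of b y x] eq by (rule refl)
qed

lemma DD_pm: "DD b \<in> pseudometrics"
  unfolding pseudometrics_def
proof (intro CollectI conjI allI)
  fix x y z
  show "0 \<le> DD b x y" by (rule DD_nonneg)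
  show "DD b x y \<le> 1" by (rule DD_le1)
  show "DD b x x = 0" by (rule DD_zero) (simp add: sb_refl)
  show "DD b x y = DD b y x" by (rule DD_sym)
  show "DD b x z \<le> DD b x y + DD b y z"
  proof (cases "DD b x z = 0")
    case True then show ?thesis using DD_nonneg[of b] by (simp add: add_nonneg_nonneg)
  next
    case False
    then obtain m where m: "DD b x z = (1/2) ^ m" "\<not> strat_bisim b (Suc m) x z"
      using DD_cases[OF False] by blast
    have "\<not> strat_bisim b (Suc m) x y \<or> \<not> strat_bisim b (Suc m) y z"
    proof (rule ccontr)
      assume "\<not> (\<not> strat_bisim b (Suc m) x y \<or> \<not> strat_bisim b (Suc m) y z)"
      then have "strat_bisim b (Suc m) x y" "strat_bisim b (Suc m) y z" by simp_all
      then have "strat_bisim b (Suc m) x z" by (rule sb_trans)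
      then show False using m(2) by simp
    qed
    then show ?thesis
    proof
      assume "\<not> strat_bisim b (Suc m) x y"
      then have "(1/2) ^ m \<le> DD b x y" by (rule DD_ge)
      then show ?thesis using m(1) DD_nonneg[of b y z] by linarith
    next
      assume "\<not> strat_bisim b (Suc m) y z"
      then have "(1/2) ^ m \<le> DD b y z" by (rule DD_ge)
      then show ?thesis using m(1) DD_nonneg[of b x y] by linarith
    qed
  qed
qed

lemma pigeon:
  fixes P :: "nat \<Rightarrow> 'b \<Rightarrow> bool"
  assumes "finite S" "\<forall>k. \<exists>y\<in>S. P k y" "\<And>j k y. j \<le> k \<Longrightarrow> P k y \<Longrightarrow> P j y"
  shows "\<exists>y\<in>S. \<forall>k. P k y"
proof (rule ccontr)
  assume "\<not> ?thesis"
  then have "\<forall>y\<in>S. \<exists>k. \<not> P k y" by blast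
  from bchoice[OF this] obtain f where f: "\<forall>y\<in>S. \<not> P (f y) y" by blast
  define K where "K = Max (f ` S)"
  obtain y where y: "y \<in> S" "P K y" using assms(2) by blast
  have "f y \<le> K" unfolding K_def using assms(1) y(1) by auto
  then have "P (f y) y" using assms(3) y(2) by blast
  then show False using f y(1) by blast
qed

lemma lift_DD_nonneg: "0 \<le> lift_dist (DD b) p q"
  using DD_nonneg by (intro lift_nonneg) auto

lemma lift_DD_le1: "lift_dist (DD b) p q \<le> 1"
  using DD_le1 by (intro lift_le1) auto

lemma finite_succ: "finite B \<Longrightarrow> finite ((\<lambda>y'. Inl (a, y')) -` B)"
  by (rule finite_vimageI) (auto simp: inj_def)

lemma DD_fix:
  assumes fin: "prechart b"
  shows "Phi b (DD b) = DD b"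
proof (intro ext)
  fix x y
  let ?e = "lift_dist (DD b)"
  have A: "finite (b x)" and B: "finite (b y)" using fin unfolding prechart_def by auto
  have "hausdorff ?e (b x) (b y) = DD b x y"
  proof (cases "DD b x y = 0")
    case True
    then have all: "\<forall>k. strat_bisim b k x y" using KD[of b _ x y] by simp
    have E: "Eout b x = Eout b y" using all[rule_format, of 1] by simp
    have "hausdorff ?e (b x) (b y) \<le> 0"
    proof (rule H2[OF _ A B])
      show "\<forall>p\<in>b x. \<exists>q\<in>b y. ?e p q \<le> 0"
      proof
        fix p assume p: "p \<in> b x"
        show "\<exists>q\<in>b y. ?e p q \<le> 0"
        proof (cases p)
          case (Inr v)
          then have "p \<in> b y" using E p unfolding Eout_def by auto
          then show ?thesis using Inr by (intro bexI[of _ p]) auto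
        next
          case (Inl ax) then obtain a x' where px: "p = Inl (a, x')" by (cases ax) auto
          have "\<exists>y'\<in>(\<lambda>y'. Inl (a, y')) -` b y. \<forall>k. strat_bisim b k x' y'"
          proof (rule pigeon)
            show "finite ((\<lambda>y'. Inl (a, y')) -` b y)" using B by (rule finite_succ)
            show "\<forall>k. \<exists>y'\<in>(\<lambda>y'. Inl (a, y')) -` b y. strat_bisim b k x' y'"
            proof
              fix k
              have "strat_bisim b (Suc k) x y" using all by blast
              then have "\<forall>a x'. Inl (a, x') \<in> b x \<longrightarrow> (\<exists>y'. Inl (a, y') \<in> b y \<and> strat_bisim b k x' y')"
                by simp
              then obtain y' where "Inl (a, y') \<in> b y" "strat_bisim b k x' y'" using p px by blast
              then show "\<exists>y'\<in>(\<lambda>y'. Inl (a, y')) -` b y. strat_bisim b k x' y'" by auto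
            qed
          qed (rule sb_mono)
          then obtain y' where "Inl (a, y') \<in> b y" "\<forall>k. strat_bisim b k x' y'" by auto
          then show ?thesis using px DD_zero[of b x' y'] by (intro bexI[of _ "Inl (a, y')"]) auto
        qed
      qed
      show "\<forall>q\<in>b y. \<exists>p\<in>b x. ?e q p \<le> 0"
      proof
        fix q assume q: "q \<in> b y"
        show "\<exists>p\<in>b x. ?e q p \<le> 0"
        proof (cases q)
          case (Inr v)
          then have "q \<in> b x" using E q unfolding Eout_def by auto
          then show ?thesis using Inr by (intro bexI[of _ q]) auto
        next
          case (Inl ay) then obtain a y' where qy: "q = Inl (a, y')" by (cases ay) auto
          have "\<exists>x'\<in>(\<lambda>x'. Inl (a, x')) -` b x. \<forall>k. strat_bisim b k y' x'"
          proof (rule pigeon)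
            show "finite ((\<lambda>x'. Inl (a, x')) -` b x)" using A by (rule finite_succ)
            show "\<forall>k. \<exists>x'\<in>(\<lambda>x'. Inl (a, x')) -` b x. strat_bisim b k y' x'"
            proof
              fix k
              have "strat_bisim b (Suc k) x y" using all by blast
              then have "\<forall>a y'. Inl (a, y') \<in> b y \<longrightarrow> (\<exists>x'. Inl (a, x') \<in> b x \<and> strat_bisim b k x' y')"
                by simp
              then obtain x' where "Inl (a, x') \<in> b x" "strat_bisim b k x' y'" using q qy by blast
              then have "Inl (a, x') \<in> b x" "strat_bisim b k y' x'" using sb_sym[of b k x' y'] by auto
              then show "\<exists>x'\<in>(\<lambda>x'. Inl (a, x')) -` b x. strat_bisim b k y' x'" by auto
            qed
          qed (rule sb_mono)
          then obtain x' where "Inl (a, x') \<in> b x" "\<forall>k. strat_bisim b k y' x'" by auto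
          then show ?thesis using qy DD_zero[of b y' x'] by (intro bexI[of _ "Inl (a, x')"]) auto
        qed
      qed
    qed simp
    moreover have "0 \<le> hausdorff ?e (b x) (b y)"
      using lift_DD_nonneg A B by (intro H0) auto
    ultimately show ?thesis using True by simp
  next
    case False
    then obtain m where m: "DD b x y = (1/2) ^ m" "strat_bisim b m x y" "\<not> strat_bisim b (Suc m) x y"
      using DD_cases[OF False] by blast
    show ?thesis
    proof (cases m)
      case 0
      have "hausdorff ?e (b x) (b y) \<le> 1" using lift_DD_le1 A B by (intro H1) auto
      moreover have "1 \<le> hausdorff ?e (b x) (b y)"
      proof -
        have ns: "\<not> strat_bisim b 1 x y" using m 0 by simp
        then consider (e1) v where "Inr v \<in> b x" "Inr v \<notin> b y"
          | (e2) v where "Inr v \<in> b y" "Inr v \<notin> b x"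
          | (t1) a x' where "Inl (a, x') \<in> b x" "\<forall>y'. Inl (a, y') \<notin> b y"
          | (t2) a y' where "Inl (a, y') \<in> b y" "\<forall>x'. Inl (a, x') \<notin> b x"
          by (auto simp: Eout_def)
        then show ?thesis
        proof cases
          case e1 then show ?thesis
            by (intro H3a[OF _ A B, of _ "Inr v"]) (auto simp: lift_Inr1)
        next
          case e2 then show ?thesis
            by (intro H3b[OF _ A B, of _ "Inr v"]) (auto simp: lift_Inr1)
        next
          case t1 then show ?thesis
            by (intro H3a[OF _ A B, of _ "Inl (a, x')"]) (auto simp: lift_Inl_set1 lift_Inl_set2)
        next
          case t2 then show ?thesis
            by (intro H3b[OF _ A B, of _ "Inl (a, y')"]) (auto simp: lift_Inl_set1 lift_Inl_set2)
        qed
      qed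
      ultimately show ?thesis using m 0 by simp
    next
      case (Suc j)
      have sj: "strat_bisim b (Suc j) x y" and nsj: "\<not> strat_bisim b (Suc (Suc j)) x y"
        using m Suc by auto
      have E: "Eout b x = Eout b y" using sj by simp
      have sj1: "\<forall>a x'. Inl (a, x') \<in> b x \<longrightarrow> (\<exists>y'. Inl (a, y') \<in> b y \<and> strat_bisim b j x' y')"
        and sj2: "\<forall>a y'. Inl (a, y') \<in> b y \<longrightarrow> (\<exists>x'. Inl (a, x') \<in> b x \<and> strat_bisim b j x' y')"
        using sj by simp_all
      have "hausdorff ?e (b x) (b y) \<le> (1/2) ^ Suc j"
      proof (rule H2[OF _ A B])
        show "\<forall>p\<in>b x. \<exists>q\<in>b y. ?e p q \<le> (1/2) ^ Suc j"
        proof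
          fix p assume p: "p \<in> b x"
          show "\<exists>q\<in>b y. ?e p q \<le> (1/2) ^ Suc j"
          proof (cases p)
            case (Inr v)
            then have "p \<in> b y" using E p unfolding Eout_def by auto
            then show ?thesis using Inr by (intro bexI[of _ p]) auto
          next
            case (Inl ax) then obtain a x' where px: "p = Inl (a, x')" by (cases ax) auto
            then obtain y' where "Inl (a, y') \<in> b y" "strat_bisim b j x' y'"
              using sj1 p px by blast
            then show ?thesis using px KD[of b j x' y'] by (intro bexI[of _ "Inl (a, y')"]) auto
          qed
        qed
        show "\<forall>q\<in>b y. \<exists>p\<in>b x. ?e q p \<le> (1/2) ^ Suc j"
        proof
          fix q assume q: "q \<in> b y"
          show "\<exists>p\<in>b x. ?e q p \<le> (1/2) ^ Suc j"
          proof (cases q)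
            case (Inr v)
            then have "q \<in> b x" using E q unfolding Eout_def by auto
            then show ?thesis using Inr by (intro bexI[of _ q]) auto
          next
            case (Inl ay) then obtain a y' where qy: "q = Inl (a, y')" by (cases ay) auto
            then obtain x' where "Inl (a, x') \<in> b x" "strat_bisim b j x' y'"
              using sj2 q qy by blast
            then show ?thesis using qy KD[of b j y' x'] sb_sym[of b j x' y']
              by (intro bexI[of _ "Inl (a, x')"]) auto
          qed
        qed
      qed simp
      moreover have "(1/2) ^ Suc j \<le> hausdorff ?e (b x) (b y)"
      proof -
        from nsj E consider
            (t1) a x' where "Inl (a, x') \<in> b x" "\<forall>y'. Inl (a, y') \<in> b y \<longrightarrow> \<not> strat_bisim b (Suc j) x' y'"
          | (t2) a y' where "Inl (a, y') \<in> b y" "\<forall>x'. Inl (a, x') \<in> b x \<longrightarrow> \<not> strat_bisim b (Suc j) x' y'"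
          by auto
        then show ?thesis
        proof cases
          case t1
          show ?thesis
          proof (rule H3a[OF _ A B t1(1)])
            show "(1/2::real) ^ Suc j \<le> 1" by (simp add: power_le_one)
            show "\<forall>q\<in>b y. (1/2) ^ Suc j \<le> ?e (Inl (a, x')) q"
            proof
              fix q assume q: "q \<in> b y"
              show "(1/2) ^ Suc j \<le> ?e (Inl (a, x')) q"
              proof (cases "\<exists>y'. q = Inl (a, y')")
                case True
                then obtain y' where qy: "q = Inl (a, y')" by blast
                then have "(1/2) ^ j \<le> DD b x' y'" using t1(2) q qy by (intro DD_ge) blast
                then show ?thesis using qy by simp
              next
                case False then show ?thesis by (simp add: lift_Inl_ne power_le_one)
              qed
            qed
          qed
        next
          case t2
          show ?thesis
          proof (rule H3b[OF _ A B t2(1)])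
            show "(1/2::real) ^ Suc j \<le> 1" by (simp add: power_le_one)
            show "\<forall>p\<in>b x. (1/2) ^ Suc j \<le> ?e (Inl (a, y')) p"
            proof
              fix p assume p: "p \<in> b x"
              show "(1/2) ^ Suc j \<le> ?e (Inl (a, y')) p"
              proof (cases "\<exists>x'. p = Inl (a, x')")
                case True
                then obtain x' where px: "p = Inl (a, x')" by blast
                then have "(1/2) ^ j \<le> DD b x' y'" using t2(2) p px by (intro DD_ge) blast
                then show ?thesis using px DD_sym[of b x' y'] by simp
              next
                case False then show ?thesis by (simp add: lift_Inl_ne power_le_one)
              qed
            qed
          qed
        qed
      qed
      ultimately show ?thesis using m Suc by simp
    qed
  qed
  then show "Phi b (DD b) x y = DD b x y" unfolding Phi_def by simp
qed


lemma lower: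
  assumes fin: "prechart b" and pm: "d \<in> pseudometrics" and fx: "Phi b d = d"
  shows "\<not> strat_bisim b (Suc k) x y \<Longrightarrow> (1/2) ^ k \<le> d x y"
proof (induction k arbitrary: x y)
  case (0 x y)
  note ns = "0.prems"
  have A: "finite (b x)" and B: "finite (b y)" using fin unfolding prechart_def by auto
  let ?e = "lift_dist d"
  have "1 \<le> hausdorff ?e (b x) (b y)"
  proof -
    from ns consider (e1) v where "Inr v \<in> b x" "Inr v \<notin> b y"
      | (e2) v where "Inr v \<in> b y" "Inr v \<notin> b x"
      | (t1) a x' where "Inl (a, x') \<in> b x" "\<forall>y'. Inl (a, y') \<notin> b y"
      | (t2) a y' where "Inl (a, y') \<in> b y" "\<forall>x'. Inl (a, x') \<notin> b x"
      by (auto simp: Eout_def)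
    then show ?thesis
    proof cases
      case e1 then show ?thesis
        by (intro H3a[OF _ A B, of _ "Inr v"]) (auto simp: lift_Inr1)
    next
      case e2 then show ?thesis
        by (intro H3b[OF _ A B, of _ "Inr v"]) (auto simp: lift_Inr1)
    next
      case t1 then show ?thesis
        by (intro H3a[OF _ A B, of _ "Inl (a, x')"]) (auto simp: lift_Inl_set1 lift_Inl_set2)
    next
      case t2 then show ?thesis
        by (intro H3b[OF _ A B, of _ "Inl (a, y')"]) (auto simp: lift_Inl_set1 lift_Inl_set2)
    qed
  qed
  then show ?case using fun_cong[OF fun_cong[OF fx, of x], of y] unfolding Phi_def by simp
next
  case (Suc j x y)
  note nsj = Suc.prems
  have A: "finite (b x)" and B: "finite (b y)" using fin unfolding prechart_def by auto
  let ?e = "lift_dist d"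
  have dnn: "\<forall>x y. 0 \<le> d x y" using pm unfolding pseudometrics_def by auto
  have "(1/2) ^ Suc j \<le> hausdorff ?e (b x) (b y)"
  proof (cases "Eout b x = Eout b y")
    case False
    then consider (e1) v where "Inr v \<in> b x" "Inr v \<notin> b y"
      | (e2) v where "Inr v \<in> b y" "Inr v \<notin> b x"
      unfolding Eout_def by auto
    then show ?thesis
    proof cases
      case e1 then show ?thesis
        by (intro H3a[OF _ A B, of _ "Inr v"]) (auto simp: lift_Inr1 power_le_one)
    next
      case e2 then show ?thesis
        by (intro H3b[OF _ A B, of _ "Inr v"]) (auto simp: lift_Inr1 power_le_one)
    qed
  next
    case E: True
    from nsj E consider
        (t1) a x' where "Inl (a, x') \<in> b x" "\<forall>y'. Inl (a, y') \<in> b y \<longrightarrow> \<not> strat_bisim b (Suc j) x' y'"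
      | (t2) a y' where "Inl (a, y') \<in> b y" "\<forall>x'. Inl (a, x') \<in> b x \<longrightarrow> \<not> strat_bisim b (Suc j) x' y'"
      by auto
    then show ?thesis
    proof cases
      case t1
      show ?thesis
      proof (rule H3a[OF _ A B t1(1)])
        show "(1/2::real) ^ Suc j \<le> 1" by (simp add: power_le_one)
        show "\<forall>q\<in>b y. (1/2) ^ Suc j \<le> ?e (Inl (a, x')) q"
        proof
          fix q assume q: "q \<in> b y"
          show "(1/2) ^ Suc j \<le> ?e (Inl (a, x')) q"
          proof (cases "\<exists>y'. q = Inl (a, y')")
            case True
            then obtain y' where qy: "q = Inl (a, y')" by blast
            then have "(1/2) ^ j \<le> d x' y'" using t1(2) q qy by (intro Suc.IH) blast
            then show ?thesis using qy by simp
          next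
            case False then show ?thesis by (simp add: lift_Inl_ne power_le_one)
          qed
        qed
      qed
    next
      case t2
      show ?thesis
      proof (rule H3b[OF _ A B t2(1)])
        show "(1/2::real) ^ Suc j \<le> 1" by (simp add: power_le_one)
        show "\<forall>p\<in>b x. (1/2) ^ Suc j \<le> ?e (Inl (a, y')) p"
        proof
          fix p assume p: "p \<in> b x"
          show "(1/2) ^ Suc j \<le> ?e (Inl (a, y')) p"
          proof (cases "\<exists>x'. p = Inl (a, x')")
            case True
            then obtain x' where px: "p = Inl (a, x')" by blast
            then have "\<not> strat_bisim b (Suc j) x' y'" using t2(2) p by blast
            then have "\<not> strat_bisim b (Suc j) y' x'" using sb_sym[of b "Suc j" y' x'] by blast
            then have "(1/2) ^ j \<le> d y' x'" by (rule Suc.IH)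
            then show ?thesis using px by simp
          next
            case False then show ?thesis by (simp add: lift_Inl_ne power_le_one)
          qed
        qed
      qed
    qed
  qed
  then show ?case using fun_cong[OF fun_cong[OF fx, of x], of y] unfolding Phi_def by simp
qed

lemma DD_least:
  assumes fin: "prechart b" and pm: "d \<in> pseudometrics" and fx: "Phi b d = d"
  shows "DD b \<le> d"
proof (intro le_funI)
  fix x y
  have dnn: "0 \<le> d x y" using pm unfolding pseudometrics_def by auto
  show "DD b x y \<le> d x y"
  proof (cases "DD b x y = 0")
    case True then show ?thesis using dnn by simp
  next
    case False
    then obtain m where "DD b x y = (1/2) ^ m" "\<not> strat_bisim b (Suc m) x y"
      using DD_cases[OF False] by blast
    then show ?thesis using lower[OF fin pm fx, of m x y] by simp
  qed
qed

lemma bd_DD: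
  assumes fin: "prechart b"
  shows "bd b = DD b"
  unfolding bd_def
proof (rule the_equality)
  have "\<forall>d'\<in>pseudometrics. Phi b d' = d' \<longrightarrow> DD b \<le> d'"
  proof (intro ballI impI)
    fix d' assume "d' \<in> pseudometrics" "Phi b d' = d'"
    then show "DD b \<le> d'" by (rule DD_least[OF fin])
  qed
  then show "DD b \<in> pseudometrics \<and> Phi b (DD b) = DD b \<and> (\<forall>d'\<in>pseudometrics. Phi b d' = d' \<longrightarrow> DD b \<le> d')"
    using DD_pm DD_fix[OF fin] by simp
next
  fix d assume h: "d \<in> pseudometrics \<and> Phi b d = d \<and> (\<forall>d'\<in>pseudometrics. Phi b d' = d' \<longrightarrow> d \<le> d')"
  then have "d \<le> DD b" using DD_pm[of b] DD_fix[OF fin] by blast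
  moreover have "DD b \<le> d" using h by (intro DD_least[OF fin]) simp_all
  ultimately show "d = DD b" by (rule antisym)
qed

theorem mainTheorem3:
  fixes \<beta> :: "'x \<Rightarrow> ('a \<times> 'x + 'v) set"
  assumes "prechart \<beta>"
  shows "\<forall>x y (k::nat). strat_bisim \<beta> k x y \<longleftrightarrow> bd \<beta> x y \<le> (1/2) ^ k"
  unfolding bd_DD[OF assms] using KD[of \<beta>] by (intro allI) (rule KD)

end
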